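(* Let $\alpha,\beta\in[0,1)$ and $\phi(t)=\beta t+(1-\beta)\min(1,t/(1-\alpha))$ for $t\in[0,1]$. Then for all $X\in\mathcal{M}^+$, \[ \|X\|_{\Lambda_\phi}=\|X\|_{TM_\phi}=\beta\,\mathbb{E}[X]+(1-\beta)\operatorname{CVar}_\alpha(X). \]
   Context: $\Omega=[0,1]$ with Lebesgue measure, $\mathcal{M}^+$ nonnegative measurable functions, $\mathbb{E}[X]=\int_0^1X\,d\omega$. $X^*(\omega)=\inf\{\lambda\ge0:\mu\{|X|>\lambda\}\le\omega\}$. For $X\ge0$, $\operatorname{CVar}_\alpha(X)=\frac{1}{1-\alpha}\int_0^{1-\alpha}X^*(\omega)\,d\omega$. For concave $\phi$ with $\phi(0)=0,\phi(1)=1$: Lorentz norm $\|X\|_{\Lambda_\phi}=X^*(0)\phi(0+)+\int_0^1X^*(\omega)\phi'(\omega)\,d\omega$; positive translation equivariant Marcinkiewicz norm $\|X\|_{TM_\phi}=\sup_{0<t<1}\{\frac{\phi(t)}{t}\int_0^tX^*\,d\omega+\frac{\phi(t)-1}{t-1}\int_t^1X^*\,d\omega\}$. *)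

theory Defs
  imports "HOL-Analysis.Analysis"
begin

text \<open>Omega = [0,1] with Lebesgue measure. Random variables are real-valued
functions; only their values on [0,1] matter.\<close>

definition Pspace :: "real measure" where
  "Pspace = lebesgue_on {0..1}"

definition nonneg_rv :: "(real \<Rightarrow> real) \<Rightarrow> bool" where
  "nonneg_rv X \<longleftrightarrow> X \<in> borel_measurable Pspace \<and> (\<forall>x\<in>{0..1}. 0 \<le> X x)"

definition expect :: "(real \<Rightarrow> real) \<Rightarrow> ennreal" where
  "expect X = (\<integral>\<^sup>+ x. ennreal (X x) \<partial>Pspace)"

text \<open>Decreasing rearrangement X*(w) = inf {lambda >= 0. mu{|X| > lambda} <= w},
valued in [0,\<infinity>] (inf of the empty set is \<infinity>).\<close>

definition rearr :: "(real \<Rightarrow> real) \<Rightarrow> real \<Rightarrow> ennreal" where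
  "rearr X w = Inf {lam :: ennreal. emeasure Pspace {x \<in> {0..1}. lam < ennreal \<bar>X x\<bar>} \<le> ennreal w}"

definition cvar :: "real \<Rightarrow> (real \<Rightarrow> real) \<Rightarrow> ennreal" where
  "cvar \<alpha> X = ennreal (1 / (1 - \<alpha>)) * (\<integral>\<^sup>+ w\<in>{0..1-\<alpha>}. rearr X w \<partial>lborel)"

definition lorentz_norm :: "(real \<Rightarrow> real) \<Rightarrow> (real \<Rightarrow> real) \<Rightarrow> ennreal" where
  "lorentz_norm \<phi> X =
     rearr X 0 * ennreal (Lim (at_right 0) \<phi>)
     + (\<integral>\<^sup>+ w\<in>{0<..<1}. rearr X w * ennreal (deriv \<phi> w) \<partial>lborel)"

definition tm_norm :: "(real \<Rightarrow> real) \<Rightarrow> (real \<Rightarrow> real) \<Rightarrow> ennreal" where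
  "tm_norm \<phi> X =
     (SUP t\<in>{0<..<1}. ennreal (\<phi> t / t) * (\<integral>\<^sup>+ w\<in>{0..t}. rearr X w \<partial>lborel)
        + ennreal ((\<phi> t - 1) / (t - 1)) * (\<integral>\<^sup>+ w\<in>{t..1}. rearr X w \<partial>lborel))"

end

theory Submission
  imports Defs
begin

lemma rearr_antimono: "w1 \<le> w2 \<Longrightarrow> rearr X w2 \<le> rearr X w1"
  unfolding rearr_def by (rule Inf_superset_mono) (auto intro: order_trans ennreal_leI)

lemma rearr_meas[measurable]: "rearr X \<in> borel_measurable borel"
proof (rule borel_measurableI_greater)
  fix y
  have "is_interval {x. y < rearr X x}"
    unfolding is_interval_1 using rearr_antimono
    by (metis (mono_tags, lifting) mem_Collect_eq order_less_le_trans)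
  then show "{x \<in> space borel. y < rearr X x} \<in> sets borel"
    using real_interval_borel_measurable by simp
qed

lemma rearr_meas_lborel[measurable]: "rearr X \<in> borel_measurable lborel"
  using rearr_meas by simp

lemma space_P[simp]: "space Pspace = {0..1}" by (simp add: Pspace_def)

lemma finite_P: "finite_measure Pspace"
  unfolding Pspace_def by (rule finite_measure_lebesgue_on) auto

lemma layer_cake:
  assumes "sigma_finite_measure M" and f[measurable]: "f \<in> borel_measurable M"
  shows "(\<integral>\<^sup>+ x. f x \<partial>M) = (\<integral>\<^sup>+ t\<in>{0..}. emeasure M {x \<in> space M. ennreal t < f x} \<partial>lborel)"
proof -
  interpret M: sigma_finite_measure M by fact
  interpret P: pair_sigma_finite M lborel
    by (simp add: pair_sigma_finite_def assms lborel.sigma_finite_measure_axioms)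
  have pt: "(\<integral>\<^sup>+ t. indicator {t. 0 \<le> t \<and> ennreal t < c} t \<partial>lborel) = c" for c :: ennreal
  proof (cases c)
    case (real r)
    then have "{t. 0 \<le> t \<and> ennreal t < c} = {0..<r}"
      by (auto simp: ennreal_less_iff)
    then show ?thesis using real by simp
  next
    case top
    then have "{t::real. 0 \<le> t \<and> ennreal t < c} = {0..}" by auto
    have "emeasure lborel {0::real..} = \<infinity>"
    proof (rule ccontr)
      assume "emeasure lborel {0::real..} \<noteq> \<infinity>"
      then obtain r where r: "emeasure lborel {0::real..} = ennreal r" "0 \<le> r"
        by (cases "emeasure lborel {0::real..}") auto
      have "emeasure lborel {0..r+1} \<le> emeasure lborel {0::real..}"
        by (rule emeasure_mono) auto
      then show False using r by simp
    qed
    moreover have "{0::real..} = Collect ((\<le>) 0)" by auto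
    ultimately show ?thesis using top by simp
  qed
  have "(\<integral>\<^sup>+ x. f x \<partial>M) = (\<integral>\<^sup>+ x. (\<integral>\<^sup>+ t. indicator {t. 0 \<le> t \<and> ennreal t < f x} t \<partial>lborel) \<partial>M)"
    by (simp add: pt)
  also have "\<dots> = (\<integral>\<^sup>+ t. (\<integral>\<^sup>+ x. indicator {t. 0 \<le> t \<and> ennreal t < f x} t \<partial>M) \<partial>lborel)"
    by (rule P.Fubini'[symmetric]) measurable
  also have "\<dots> = (\<integral>\<^sup>+ t\<in>{0..}. emeasure M {x \<in> space M. ennreal t < f x} \<partial>lborel)"
  proof (rule nn_integral_cong)
    fix t :: real
    have "(\<integral>\<^sup>+ x. indicator {t. 0 \<le> t \<and> ennreal t < f x} t \<partial>M)
       = (\<integral>\<^sup>+ x. indicator {t. 0 \<le> t} t * indicator {x \<in> space M. ennreal t < f x} x \<partial>M)"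
      by (intro nn_integral_cong) (auto simp: indicator_def)
    also have "\<dots> = indicator {t. 0 \<le> t} t * emeasure M {x \<in> space M. ennreal t < f x}"
      by (rule nn_integral_cmult_indicator) measurable
    finally show "(\<integral>\<^sup>+ x. indicator {t. 0 \<le> t \<and> ennreal t < f x} t \<partial>M) = emeasure M {x \<in> space M. ennreal t < f x} * indicator {0..} t"
      by (simp add: indicator_def)
  qed
  finally show ?thesis .
qed

definition EE :: "(real \<Rightarrow> real) \<Rightarrow> ennreal \<Rightarrow> ennreal" where
  "EE X lam = emeasure Pspace {x \<in> {0..1}. lam < ennreal \<bar>X x\<bar>}"

lemma EE_mono:
  assumes [measurable]: "X \<in> borel_measurable Pspace" and "l1 \<le> l2"
  shows "EE X l2 \<le> EE X l1"
  unfolding EE_def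
proof (rule emeasure_mono)
  show "{x \<in> {0..1}. l2 < ennreal \<bar>X x\<bar>} \<subseteq> {x \<in> {0..1}. l1 < ennreal \<bar>X x\<bar>}"
    using assms(2) by (auto intro: le_less_trans)
  have "{x \<in> space Pspace. l1 < ennreal \<bar>X x\<bar>} \<in> sets Pspace" by measurable
  then show "{x \<in> {0..1}. l1 < ennreal \<bar>X x\<bar>} \<in> sets Pspace" by simp
qed

lemma EE_cont:
  assumes [measurable]: "X \<in> borel_measurable Pspace" and t: "0 \<le> t"
  shows "EE X (ennreal t) = (SUP n. EE X (ennreal (t + inverse (real (Suc n)))))"
proof -
  define A where "A n = {x \<in> {0..1}. ennreal (t + inverse (real (Suc n))) < ennreal \<bar>X x\<bar>}" for n
  have "range A \<subseteq> sets Pspace"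
  proof safe
    fix n
    have "{x \<in> space Pspace. ennreal (t + inverse (real (Suc n))) < ennreal \<bar>X x\<bar>} \<in> sets Pspace" by measurable
    then show "A n \<in> sets Pspace" by (simp add: A_def)
  qed
  moreover have "incseq A"
  proof (rule incseq_SucI)
    fix n
    have "t + inverse (real (Suc (Suc n))) \<le> t + inverse (real (Suc n))"
      by (simp add: field_simps)
    then have "ennreal (t + inverse (real (Suc (Suc n)))) \<le> ennreal (t + inverse (real (Suc n)))"
      by (rule ennreal_leI)
    then show "A n \<subseteq> A (Suc n)" unfolding A_def
      by (auto simp del: ennreal_plus of_nat_Suc intro: le_less_trans)
  qed
  moreover have "(\<Union>i. A i) = {x \<in> {0..1}. ennreal t < ennreal \<bar>X x\<bar>}"
  proof safe
    fix x i assume "x \<in> A i"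
    then have "t + inverse (real (Suc i)) < \<bar>X x\<bar>" "x \<in> {0..1}" unfolding A_def using t
      by (auto simp del: ennreal_plus simp: ennreal_less_iff)
    moreover have "0 \<le> inverse (real (Suc i))" by simp
    ultimately have "t < \<bar>X x\<bar>" by linarith
    then show "ennreal t < ennreal \<bar>X x\<bar>" using t by (simp add: ennreal_less_iff)
    show "x \<in> {0..1}" by fact
  next
    fix x assume x: "x \<in> {0..1}" "ennreal t < ennreal \<bar>X x\<bar>"
    then have "0 < \<bar>X x\<bar> - t" using t by (simp add: ennreal_less_iff)
    then obtain n where "inverse (real (Suc n)) < \<bar>X x\<bar> - t"
      using reals_Archimedean by blast
    then have "x \<in> A n" unfolding A_def using x t by (simp del: ennreal_plus add: ennreal_less_iff)
    then show "x \<in> (\<Union>i. A i)" by blast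
  qed
  ultimately show ?thesis
    using SUP_emeasure_incseq[of A Pspace] unfolding EE_def A_def by simp
qed

lemma level:
  assumes [measurable]: "X \<in> borel_measurable Pspace" and t: "0 \<le> t"
  shows "ennreal t < rearr X w \<longleftrightarrow> ennreal w < EE X (ennreal t)"
proof
  assume "ennreal t < rearr X w"
  show "ennreal w < EE X (ennreal t)"
  proof (rule ccontr)
    assume "\<not> ennreal w < EE X (ennreal t)"
    then have "ennreal t \<in> {lam. EE X lam \<le> ennreal w}" by simp
    then have "rearr X w \<le> ennreal t" unfolding rearr_def EE_def[symmetric] by (rule Inf_lower)
    with \<open>ennreal t < rearr X w\<close> show False by simp
  qed
next
  assume "ennreal w < EE X (ennreal t)"
  then obtain n where n: "ennreal w < EE X (ennreal (t + inverse (real (Suc n))))"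
    using EE_cont[OF assms] by (auto simp: less_SUP_iff)
  have "ennreal (t + inverse (real (Suc n))) \<le> rearr X w"
    unfolding rearr_def EE_def[symmetric]
  proof (rule Inf_greatest)
    fix lam assume "lam \<in> {lam. EE X lam \<le> ennreal w}"
    then have lw: "EE X lam \<le> ennreal w" by simp
    show "ennreal (t + inverse (real (Suc n))) \<le> lam"
    proof (rule ccontr)
      assume "\<not> ?thesis"
      then have "lam \<le> ennreal (t + inverse (real (Suc n)))" by simp
      then have "EE X (ennreal (t + inverse (real (Suc n)))) \<le> EE X lam" by (rule EE_mono[OF assms(1)])
      with lw n show False by simp
    qed
  qed
  moreover have "ennreal t < ennreal (t + inverse (real (Suc n)))"
    using t by (simp del: ennreal_plus add: ennreal_less_iff)
  ultimately show "ennreal t < rearr X w" by simp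
qed

lemma emeasure_P_space: "emeasure Pspace {0..1} = 1"
  unfolding Pspace_def by (simp add: emeasure_restrict_space)

lemma EE_le1: "EE X l \<le> 1"
proof -
  have "EE X l \<le> emeasure Pspace (space Pspace)" unfolding EE_def by (rule emeasure_space)
  then show ?thesis using emeasure_P_space by simp
qed

lemma expect_rearr:
  assumes "nonneg_rv X"
  shows "expect X = (\<integral>\<^sup>+ w\<in>{0..1}. rearr X w \<partial>lborel)"
proof -
  have Xm[measurable]: "X \<in> borel_measurable Pspace" and Xp: "\<And>x. x \<in> {0..1} \<Longrightarrow> 0 \<le> X x"
    using assms unfolding nonneg_rv_def by auto
  interpret P: finite_measure Pspace by (rule finite_P)
  have "expect X = (\<integral>\<^sup>+ t\<in>{0..}. emeasure Pspace {x \<in> space Pspace. ennreal t < ennreal (X x)} \<partial>lborel)"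
    unfolding expect_def by (rule layer_cake) (auto simp: P.sigma_finite_measure_axioms)
  also have "\<dots> = (\<integral>\<^sup>+ t\<in>{0..}. emeasure lborel {w \<in> space lborel. ennreal t < rearr X w * indicator {0..1} w} \<partial>lborel)"
  proof (rule nn_integral_cong)
    fix t :: real
    show "emeasure Pspace {x \<in> space Pspace. ennreal t < ennreal (X x)} * indicator {0..} t =
          emeasure lborel {w \<in> space lborel. ennreal t < rearr X w * indicator {0..1} w} * indicator {0..} t"
    proof (cases "0 \<le> t")
      case t: True
      have "{x \<in> space Pspace. ennreal t < ennreal (X x)} = {x \<in> {0..1}. ennreal t < ennreal \<bar>X x\<bar>}"
        using Xp by auto
      then have e1: "emeasure Pspace {x \<in> space Pspace. ennreal t < ennreal (X x)} = EE X (ennreal t)"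
        unfolding EE_def by simp
      obtain m where m: "EE X (ennreal t) = ennreal m" "0 \<le> m"
        using EE_le1[of X "ennreal t"] by (cases "EE X (ennreal t)") (auto simp: top_unique)
      have m1: "m \<le> 1" using EE_le1[of X "ennreal t"] m by simp
      have iff: "(ennreal t < rearr X w * indicator {0..1} w) \<longleftrightarrow> (0 \<le> w \<and> w < m)" for w
      proof
        assume "ennreal t < rearr X w * indicator {0..1} w"
        then have w: "w \<in> {0..1}" "ennreal t < rearr X w"
          by (cases "w \<in> {0..1}"; simp)+
        then have "ennreal w < ennreal m" using level[OF Xm t] m by simp
        then show "0 \<le> w \<and> w < m" using w by (auto simp: ennreal_less_iff)
      next
        assume w: "0 \<le> w \<and> w < m"
        then have "ennreal w < EE X (ennreal t)" using m by (simp add: ennreal_less_iff)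
        then have "ennreal t < rearr X w" using level[OF Xm t] by simp
        moreover have "w \<in> {0..1}" using w m1 by simp
        ultimately show "ennreal t < rearr X w * indicator {0..1} w" by simp
      qed
      have "{w \<in> space lborel. ennreal t < rearr X w * indicator {0..1} w} = {0..<m}"
        by (rule set_eqI) (simp only: iff mem_Collect_eq space_lborel space_borel UNIV_I atLeastLessThan_iff simp_thms)
      then show ?thesis using e1 m by simp
    qed simp
  qed
  also have "\<dots> = (\<integral>\<^sup>+ w. rearr X w * indicator {0..1} w \<partial>lborel)"
    by (rule layer_cake[symmetric]) (auto simp: lborel.sigma_finite_measure_axioms)
  finally show ?thesis .
qed

lemma I_split:
  assumes "u \<le> v" "v \<le> w"
  shows "(\<integral>\<^sup>+ x\<in>{u..w}. rearr X x \<partial>lborel) = (\<integral>\<^sup>+ x\<in>{u..v}. rearr X x \<partial>lborel) + (\<integral>\<^sup>+ x\<in>{v..w}. rearr X x \<partial>lborel)"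
proof -
  have "(\<integral>\<^sup>+ x\<in>{u..w}. rearr X x \<partial>lborel) = (\<integral>\<^sup>+ x. rearr X x * indicator {u..v} x + rearr X x * indicator {v..w} x \<partial>lborel)"
  proof (rule nn_integral_cong_AE)
    show "AE x in lborel. rearr X x * indicator {u..w} x = rearr X x * indicator {u..v} x + rearr X x * indicator {v..w} x"
      using AE_lborel_singleton[of v]
      by eventually_elim (use assms in \<open>auto simp: indicator_def\<close>)
  qed
  also have "\<dots> = (\<integral>\<^sup>+ x\<in>{u..v}. rearr X x \<partial>lborel) + (\<integral>\<^sup>+ x\<in>{v..w}. rearr X x \<partial>lborel)"
    by (rule nn_integral_add) measurable
  finally show ?thesis .
qed

lemma I_open:
  "(\<integral>\<^sup>+ x\<in>{u<..<v}. rearr X x * c \<partial>lborel) = (\<integral>\<^sup>+ x\<in>{u..v}. rearr X x * c \<partial>lborel)"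
  by (rule nn_integral_cong_AE)
    (use AE_lborel_singleton[of u] AE_lborel_singleton[of v] in \<open>eventually_elim, auto simp: indicator_def\<close>)

lemma I_upper:
  assumes "u \<le> v"
  shows "(\<integral>\<^sup>+ x\<in>{u..v}. rearr X x \<partial>lborel) \<le> ennreal (v - u) * rearr X u"
proof -
  have "(\<integral>\<^sup>+ x\<in>{u..v}. rearr X x \<partial>lborel) \<le> (\<integral>\<^sup>+ x. rearr X u * indicator {u..v} x \<partial>lborel)"
    by (rule nn_integral_mono) (auto simp: indicator_def intro: rearr_antimono)
  also have "\<dots> = ennreal (v - u) * rearr X u"
    using assms by (simp add: nn_integral_cmult_indicator mult.commute)
  finally show ?thesis .
qed

lemma I_lower:
  assumes "u \<le> v"
  shows "ennreal (v - u) * rearr X v \<le> (\<integral>\<^sup>+ x\<in>{u..v}. rearr X x \<partial>lborel)"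
proof -
  have "ennreal (v - u) * rearr X v = (\<integral>\<^sup>+ x. rearr X v * indicator {u..v} x \<partial>lborel)"
    using assms by (simp add: nn_integral_cmult_indicator mult.commute)
  also have "\<dots> \<le> (\<integral>\<^sup>+ x\<in>{u..v}. rearr X x \<partial>lborel)"
    by (rule nn_integral_mono) (auto simp: indicator_def intro: rearr_antimono)
  finally show ?thesis .
qed

lemma key_ineq:
  fixes Q B R :: ennreal and a m b ka kb :: real
  assumes "0 \<le> b" "b \<le> m" "m \<le> a" "0 \<le> ka" "0 \<le> kb" "(m - b) * ka = (a - m) * kb"
    and "B \<le> ennreal ka * R" "ennreal kb * R \<le> Q"
  shows "ennreal m * Q + ennreal m * B \<le> ennreal a * Q + ennreal b * B"
proof -
  have em: "ennreal m = ennreal b + ennreal (m - b)" using assms by (simp flip: ennreal_plus)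
  have ea: "ennreal a = ennreal m + ennreal (a - m)" using assms by (simp flip: ennreal_plus)
  have "ennreal (m - b) * B \<le> ennreal (m - b) * (ennreal ka * R)"
    using assms by (intro mult_left_mono) auto
  also have "\<dots> = ennreal ((m - b) * ka) * R" using assms(2,4) by (simp add: ennreal_mult mult.assoc)
  also have "\<dots> = ennreal ((a - m) * kb) * R" using assms(6) by simp
  also have "\<dots> = ennreal (a - m) * (ennreal kb * R)" using assms(3,5) by (simp add: ennreal_mult mult.assoc)
  also have "\<dots> \<le> ennreal (a - m) * Q" using assms by (intro mult_left_mono) auto
  finally have *: "ennreal (m - b) * B \<le> ennreal (a - m) * Q" .
  have "ennreal m * Q + ennreal m * B = ennreal m * Q + ennreal b * B + ennreal (m - b) * B"
    unfolding em by (simp add: distrib_right add.assoc)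
  also have "\<dots> \<le> ennreal m * Q + ennreal b * B + ennreal (a - m) * Q"
    using * by (rule add_left_mono)
  also have "\<dots> = ennreal a * Q + ennreal b * B"
    unfolding ea by (simp add: distrib_right add_ac)
  finally show ?thesis .
qed

theorem theorem21:
  fixes \<alpha> \<beta> :: real and X :: "real \<Rightarrow> real"
  assumes "0 \<le> \<alpha>" "\<alpha> < 1" "0 \<le> \<beta>" "\<beta> < 1"
    and "nonneg_rv X"
  defines "\<phi> \<equiv> (\<lambda>t. \<beta> * t + (1 - \<beta>) * min 1 (t / (1 - \<alpha>)))"
  shows "lorentz_norm \<phi> X = tm_norm \<phi> X
     \<and> tm_norm \<phi> X = ennreal \<beta> * expect X + ennreal (1 - \<beta>) * cvar \<alpha> X"
proof -
  define c where "c = 1 - \<alpha>"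
  have c: "0 < c" "c \<le> 1" using assms(1,2) by (auto simp: c_def)
  define a where "a = \<beta> + (1 - \<beta>) / c"
  have b: "0 \<le> \<beta>" "\<beta> < 1" by fact+
  have a1: "1 \<le> a"
  proof -
    have "0 \<le> (1 - \<beta>) * (1 - c)" using c b by simp
    then have "1 - \<beta> \<le> (1 - \<beta>) / c" using c b by (simp add: field_simps algebra_simps)
    then show ?thesis unfolding a_def by simp
  qed
  have phi: "\<phi> = (\<lambda>t. \<beta> * t + (1 - \<beta>) * min 1 (t / c))" unfolding \<phi>_def c_def ..
  define A where "A = (\<integral>\<^sup>+ x\<in>{0..c}. rearr X x \<partial>lborel)"
  define B where "B = (\<integral>\<^sup>+ x\<in>{c..1}. rearr X x \<partial>lborel)"
  define T where "T = ennreal a * A + ennreal \<beta> * B"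
  have exp: "expect X = A + B"
    unfolding A_def B_def using expect_rearr[OF assms(5)] I_split[of 0 c 1 X] c by simp
  have rhs: "ennreal \<beta> * expect X + ennreal (1 - \<beta>) * cvar \<alpha> X = T"
  proof -
    have "cvar \<alpha> X = ennreal (1 / c) * A" unfolding cvar_def A_def c_def ..
    then have "ennreal (1 - \<beta>) * cvar \<alpha> X = (ennreal (1 - \<beta>) * ennreal (1 / c)) * A"
      by (simp add: mult.assoc)
    also have "\<dots> = ennreal ((1 - \<beta>) / c) * A"
      using b c by (simp add: ennreal_mult[symmetric])
    finally have e: "ennreal (1 - \<beta>) * cvar \<alpha> X = ennreal ((1 - \<beta>) / c) * A" .
    have "ennreal \<beta> * expect X + ennreal (1 - \<beta>) * cvar \<alpha> X
        = ennreal \<beta> * A + ennreal ((1 - \<beta>) / c) * A + ennreal \<beta> * B"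
      unfolding e exp by (simp add: distrib_left add_ac)
    also have "\<dots> = T"
    proof -
      have "ennreal a = ennreal \<beta> + ennreal ((1 - \<beta>) / c)"
        unfolding a_def using b c by (simp add: ennreal_plus)
      then show ?thesis unfolding T_def by (simp add: distrib_right)
    qed
    finally show ?thesis .
  qed
  have lim: "Lim (at_right 0) \<phi> = 0"
  proof (rule tendsto_Lim)
    show "\<not> trivial_limit (at_right (0::real))" by simp
    have "((\<lambda>t. \<beta> * t + (1 - \<beta>) * min 1 (t / c)) \<longlongrightarrow> \<beta> * 0 + (1 - \<beta>) * min 1 (0 / c)) (at_right 0)"
      by (intro tendsto_intros) (use c in auto)
    then show "(\<phi> \<longlongrightarrow> 0) (at_right 0)" unfolding phi by simp
  qed
  have d1: "deriv \<phi> w = a" if "0 < w" "w < c" for w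
  proof (rule DERIV_imp_deriv)
    have "((\<lambda>t. \<beta> * t + (1 - \<beta>) * (t / c)) has_field_derivative \<beta> + (1 - \<beta>) / c) (at w)"
      by (intro derivative_eq_intros) (use c in auto)
    then show "(\<phi> has_field_derivative a) (at w)"
      unfolding a_def
      by (rule has_field_derivative_transform_within_open[where S="{..<c}"])
         (use that c in \<open>auto simp: phi\<close>)
  qed
  have d2: "deriv \<phi> w = \<beta>" if "c < w" for w
  proof (rule DERIV_imp_deriv)
    have "((\<lambda>t. \<beta> * t + (1 - \<beta>)) has_field_derivative \<beta>) (at w)"
      by (intro derivative_eq_intros) auto
    then show "(\<phi> has_field_derivative \<beta>) (at w)"
      by (rule has_field_derivative_transform_within_open[where S="{c<..}"])
         (use that c in \<open>auto simp: phi\<close>)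
  qed
  have lor: "lorentz_norm \<phi> X = T"
  proof -
    have "(\<integral>\<^sup>+ w\<in>{0<..<1}. rearr X w * ennreal (deriv \<phi> w) \<partial>lborel)
        = (\<integral>\<^sup>+ w. ennreal a * (rearr X w * indicator {0..c} w) + ennreal \<beta> * (rearr X w * indicator {c..1} w) \<partial>lborel)"
    proof (rule nn_integral_cong_AE)
      show "AE w in lborel. rearr X w * ennreal (deriv \<phi> w) * indicator {0<..<1} w =
          ennreal a * (rearr X w * indicator {0..c} w) + ennreal \<beta> * (rearr X w * indicator {c..1} w)"
        using AE_lborel_singleton[of 0] AE_lborel_singleton[of c] AE_lborel_singleton[of 1]
      proof eventually_elim
        case (elim w)
        show ?case
        proof (cases "0 < w \<and> w < 1")
          case True
          show ?thesis
          proof (cases "w < c")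
            case True
            then show ?thesis using \<open>0 < w \<and> w < 1\<close> d1 by (simp add: mult.commute)
          next
            case False
            then have "c < w" using elim by simp
            then show ?thesis using \<open>0 < w \<and> w < 1\<close> d2 by (simp add: mult.commute)
          qed
        next
          case False
          then show ?thesis using elim c by (auto simp: indicator_def)
        qed
      qed
    qed
    also have "\<dots> = ennreal a * A + ennreal \<beta> * B"
      unfolding A_def B_def
      by (subst nn_integral_add) (auto simp: nn_integral_cmult)
    finally show ?thesis unfolding lorentz_norm_def lim T_def by simp
  qed
  define V where "V t = ennreal (\<phi> t / t) * (\<integral>\<^sup>+ w\<in>{0..t}. rearr X w \<partial>lborel)
        + ennreal ((\<phi> t - 1) / (t - 1)) * (\<integral>\<^sup>+ w\<in>{t..1}. rearr X w \<partial>lborel)" for t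
  have tm_def': "tm_norm \<phi> X = (SUP t\<in>{0<..<1}. V t)" unfolding tm_norm_def V_def ..
  have upper: "V t \<le> T" if t: "0 < t" "t < 1" for t
  proof (cases "t \<le> c")
    case True
    define m where "m = (1 - a * t) / (1 - t)"
    have pt: "\<phi> t = a * t" unfolding phi a_def using True c t by (simp add: field_simps)
    have p: "\<phi> t / t = a" using pt t by simp
    have mm: "(\<phi> t - 1) / (t - 1) = m" unfolding m_def pt using t by (simp add: field_simps)
    have "m * (1 - t) = 1 - a * t" unfolding m_def using t by simp
    have bm: "\<beta> \<le> m"
    proof -
      have "0 \<le> (1 - \<beta>) * (c - t)" using True b by simp
      then have "(a - \<beta>) * t \<le> 1 - \<beta>" unfolding a_def using True c b t by (simp add: field_simps algebra_simps)
      then have "\<beta> * (1 - t) \<le> 1 - a * t" by (simp add: algebra_simps)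
      then show ?thesis unfolding m_def using t by (simp add: field_simps)
    qed
    have ma: "m \<le> a" unfolding m_def using t a1 by (simp add: field_simps)
    have id: "(m - \<beta>) * (1 - c) = (a - m) * (c - t)"
    proof -
      have "m * (1 - t) = 1 - a * t" unfolding m_def using t by simp
      moreover have "a * c = \<beta> * c + (1 - \<beta>)" unfolding a_def using c by (simp add: field_simps)
      ultimately show ?thesis by (simp add: algebra_simps)
    qed
    let ?Q = "(\<integral>\<^sup>+ w\<in>{t..c}. rearr X w \<partial>lborel)"
    let ?P = "(\<integral>\<^sup>+ w\<in>{0..t}. rearr X w \<partial>lborel)"
    have "V t = ennreal a * ?P + (ennreal m * ?Q + ennreal m * B)"
      unfolding V_def p mm B_def using I_split[of t c 1 X] True c by (simp add: distrib_left)
    also have "\<dots> \<le> ennreal a * ?P + (ennreal a * ?Q + ennreal \<beta> * B)"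
      apply (rule add_left_mono)
      apply (rule key_ineq[where ka="1 - c" and kb="c - t" and R="rearr X c"])
      using b bm ma c True id I_upper[of c 1 X] I_lower[of t c X] by (auto simp: B_def)
    also have "\<dots> = T" unfolding T_def A_def using I_split[of 0 t c X] True t
      by (simp add: distrib_left add_ac)
    finally show ?thesis .
  next
    case False
    define p where "p = (\<beta> * t + (1 - \<beta>)) / t"
    have pt: "\<phi> t = \<beta> * t + (1 - \<beta>)" unfolding phi using False c t by (simp add: field_simps)
    have pp: "\<phi> t / t = p" unfolding p_def pt ..
    have mm: "(\<phi> t - 1) / (t - 1) = \<beta>" unfolding pt using t by (simp add: field_simps)
    have bp: "\<beta> \<le> p" unfolding p_def using t b by (simp add: field_simps)
    have pa: "p \<le> a"
    proof -
      have "(1 - \<beta>) * c \<le> (1 - \<beta>) * t" using False b by (intro mult_left_mono) auto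
      then show ?thesis unfolding p_def a_def using t c by (simp add: field_simps)
    qed
    have id: "(p - \<beta>) * (t - c) = (a - p) * c"
    proof -
      have "p * t = \<beta> * t + (1 - \<beta>)" unfolding p_def using t by simp
      moreover have "a * c = \<beta> * c + (1 - \<beta>)" unfolding a_def using c by (simp add: field_simps)
      ultimately show ?thesis by (simp add: algebra_simps)
    qed
    let ?Q = "(\<integral>\<^sup>+ w\<in>{c..t}. rearr X w \<partial>lborel)"
    let ?S = "(\<integral>\<^sup>+ w\<in>{t..1}. rearr X w \<partial>lborel)"
    have "V t = (ennreal p * A + ennreal p * ?Q) + ennreal \<beta> * ?S"
      unfolding V_def pp mm A_def using I_split[of 0 c t X] False c by (simp add: distrib_left)
    also have "\<dots> \<le> (ennreal a * A + ennreal \<beta> * ?Q) + ennreal \<beta> * ?S"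
      apply (rule add_right_mono)
      apply (rule key_ineq[where ka="t - c" and kb="c" and R="rearr X c"])
      using b bp pa c False id I_upper[of c t X] I_lower[of 0 c X] by (auto simp: A_def)
    also have "\<dots> = T" unfolding T_def B_def using I_split[of c t 1 X] False t
      by (simp add: distrib_left add_ac)
    finally show ?thesis .
  qed
  have attained: "\<exists>t\<in>{0<..<1}. T \<le> V t"
  proof (cases "c < 1")
    case True
    have "\<phi> c / c = a" unfolding phi a_def using c by (simp add: field_simps)
    moreover have "(\<phi> c - 1) / (c - 1) = \<beta>" unfolding phi using c True by (simp add: field_simps)
    ultimately have "V c = T" unfolding V_def T_def A_def B_def by simp
    then show ?thesis using c True by force
  next
    case False
    then have c1: "c = 1" using c by simp
    have a1: "a = 1" unfolding a_def c1 by simp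
    have B0: "B = 0" unfolding B_def c1 using I_upper[of 1 1 X] by simp
    have ph: "\<phi> (1/2) = 1/2" unfolding phi c1 by (simp add: field_simps)
    have "V (1/2) = A" unfolding V_def ph A_def c1 using I_split[of 0 "1/2" 1 X] by simp
    then show ?thesis unfolding T_def a1 B0 by force
  qed
  have tmT: "tm_norm \<phi> X = T"
    unfolding tm_def'
  proof (rule antisym)
    show "(SUP t\<in>{0<..<1}. V t) \<le> T" by (rule SUP_least) (use upper in auto)
    show "T \<le> (SUP t\<in>{0<..<1}. V t)" using attained by (meson SUP_upper2)
  qed
  show ?thesis using lor tmT rhs by simp
qed

end
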